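(* Let $g,r,d$ and ramification sequences $\alpha,\beta$ satisfy $\rho(g,r,d,\alpha,\beta)=0$. Then the EH group acts transitively on $YT(g,r,d,\alpha,\beta)$.
   Context: Ramification sequences: $\alpha=(\alpha_0,\dots,\alpha_r)$ integers with $d-r\ge\alpha_0\ge\cdots\ge\alpha_r\ge0$, $|\alpha|=\sum\alpha_i$; $g-d+r\ge0$; $\rho(g,r,d,\alpha,\beta)=g-(r+1)(g-d+r)-|\alpha|-|\beta|$. Skew diagram $\sigma(g,r,d,\alpha,\beta)$ (with $m=g-d+r$): rows $k=1,\dots,r+1$ numbered top to bottom, row $k$ consisting of boxes $(k,c)$ with $\alpha_0-\alpha_{r+1-k}<c\le\alpha_0+m+\beta_{k-1}$ (columns numbered left to right); it has $g$ boxes when $\rho=0$. $YT(g,r,d,\alpha,\beta)$ is the set of standard Young tableaux of this shape: bijective fillings with $1,\dots,g$ strictly increasing along rows (left to right) and columns (top to bottom). The distance between boxes $(i,j),(i',j')$ is $|i-i'|+|j-j'|$. For $1\le t<g$ and $a>0$, $\pi_{t,a}$ is the permutation of $YT(g,r,d,\alpha,\beta)$ exchanging the entries $t$ and $t+1$ in every tableau where they lie in different rows and different columns at distance exactly $a$, and fixing all other tableaux. The EH group is the subgroup of the symmetric group on $YT(g,r,d,\alpha,\beta)$ generated by all $\pi_{t,a}$. *)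

theory Defs
  imports Main "HOL-Algebra.Bij" "HOL-Algebra.Generated_Groups"
begin

text \<open>Ramification sequence alpha = (alpha 0, ..., alpha r) with d - r >= alpha 0 >= ... >= alpha r >= 0.
  Entries are natural numbers; d >= r is required so that d - r is meaningful.\<close>
definition ram_seq :: "nat \<Rightarrow> nat \<Rightarrow> (nat \<Rightarrow> nat) \<Rightarrow> bool" where
  "ram_seq r d alpha \<longleftrightarrow> r \<le> d \<and> alpha 0 \<le> d - r \<and> (\<forall>i<r. alpha (Suc i) \<le> alpha i)"

definition size_seq :: "nat \<Rightarrow> (nat \<Rightarrow> nat) \<Rightarrow> int" where
  "size_seq r alpha = (\<Sum>i\<le>r. int (alpha i))"

definition rho :: "nat \<Rightarrow> nat \<Rightarrow> nat \<Rightarrow> (nat \<Rightarrow> nat) \<Rightarrow> (nat \<Rightarrow> nat) \<Rightarrow> int" where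
  "rho g r d alpha beta =
     int g - (int r + 1) * (int g - int d + int r) - size_seq r alpha - size_seq r beta"

text \<open>The skew diagram sigma(g,r,d,alpha,beta); boxes are (row, column), m = g - d + r.\<close>
definition skew_shape :: "nat \<Rightarrow> nat \<Rightarrow> nat \<Rightarrow> (nat \<Rightarrow> nat) \<Rightarrow> (nat \<Rightarrow> nat) \<Rightarrow> (nat \<times> nat) set" where
  "skew_shape g r d alpha beta =
     {(k, c). 1 \<le> k \<and> k \<le> r + 1 \<and>
        int (alpha 0) - int (alpha (r + 1 - k)) < int c \<and>
        int c \<le> int (alpha 0) + (int g - int d + int r) + int (beta (k - 1))}"

definition YT :: "nat \<Rightarrow> nat \<Rightarrow> nat \<Rightarrow> (nat \<Rightarrow> nat) \<Rightarrow> (nat \<Rightarrow> nat) \<Rightarrow> ((nat \<times> nat) \<Rightarrow> nat) set" where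
  "YT g r d alpha beta =
    (let S = skew_shape g r d alpha beta in
     {T. T \<in> extensional S \<and> bij_betw T S {1..g} \<and>
         (\<forall>i j j'. (i, j) \<in> S \<longrightarrow> (i, j') \<in> S \<longrightarrow> j < j' \<longrightarrow> T (i, j) < T (i, j')) \<and>
         (\<forall>i i' j. (i, j) \<in> S \<longrightarrow> (i', j) \<in> S \<longrightarrow> i < i' \<longrightarrow> T (i, j) < T (i', j))})"

definition box_dist :: "nat \<times> nat \<Rightarrow> nat \<times> nat \<Rightarrow> nat" where
  "box_dist x y = nat \<bar>int (fst x) - int (fst y)\<bar> + nat \<bar>int (snd x) - int (snd y)\<bar>"

definition swappable :: "(nat \<times> nat) set \<Rightarrow> nat \<Rightarrow> nat \<Rightarrow> ((nat \<times> nat) \<Rightarrow> nat) \<Rightarrow> bool" where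
  "swappable S t a T \<longleftrightarrow>
     (\<exists>x\<in>S. \<exists>y\<in>S. T x = t \<and> T y = t + 1 \<and> fst x \<noteq> fst y \<and> snd x \<noteq> snd y \<and> box_dist x y = a)"

definition swap_entries :: "(nat \<times> nat) set \<Rightarrow> nat \<Rightarrow> ((nat \<times> nat) \<Rightarrow> nat) \<Rightarrow> ((nat \<times> nat) \<Rightarrow> nat)" where
  "swap_entries S t T = (\<lambda>x\<in>S. if T x = t then t + 1 else if T x = t + 1 then t else T x)"

definition pi_perm :: "nat \<Rightarrow> nat \<Rightarrow> nat \<Rightarrow> (nat \<Rightarrow> nat) \<Rightarrow> (nat \<Rightarrow> nat) \<Rightarrow> nat \<Rightarrow> nat
    \<Rightarrow> (((nat \<times> nat) \<Rightarrow> nat) \<Rightarrow> ((nat \<times> nat) \<Rightarrow> nat))" where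
  "pi_perm g r d alpha beta t a =
    (let S = skew_shape g r d alpha beta in
     (\<lambda>T\<in>YT g r d alpha beta. if swappable S t a T then swap_entries S t T else T))"

definition EH_group where
  "EH_group g r d alpha beta =
     generate (BijGroup (YT g r d alpha beta))
       {pi_perm g r d alpha beta t a | t a. 1 \<le> t \<and> t < g \<and> 0 < a}"

end

theory Submission
  imports Defs
begin

definition tau :: "nat \<Rightarrow> nat \<Rightarrow> nat" where
  "tau t v = (if v = t then Suc t else if v = Suc t then t else v)"

lemma tau_mono: "a < b \<Longrightarrow> \<not> (a = t \<and> b = Suc t) \<Longrightarrow> tau t a < tau t b"
  by (auto simp: tau_def)

lemma tau_tau[simp]: "tau t (tau t a) = a"
  by (auto simp: tau_def)

lemma tau_bij: "1 \<le> t \<Longrightarrow> Suc t \<le> g \<Longrightarrow> bij_betw (tau t) {1..g} {1..g}"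
  by (rule bij_betw_byWitness[where f'="tau t"]) (auto simp: tau_def)

lemma swap_entries_eq: "swap_entries S t T = (\<lambda>x\<in>S. tau t (T x))"
  unfolding swap_entries_def tau_def by (rule restrict_ext) simp

definition SYT :: "(nat \<times> nat) set \<Rightarrow> nat \<Rightarrow> ((nat \<times> nat) \<Rightarrow> nat) \<Rightarrow> bool" where
  "SYT S g T \<longleftrightarrow> T \<in> extensional S \<and> bij_betw T S {1..g} \<and>
         (\<forall>i j j'. (i, j) \<in> S \<longrightarrow> (i, j') \<in> S \<longrightarrow> j < j' \<longrightarrow> T (i, j) < T (i, j')) \<and>
         (\<forall>i i' j. (i, j) \<in> S \<longrightarrow> (i', j) \<in> S \<longrightarrow> i < i' \<longrightarrow> T (i, j) < T (i', j))"

lemma YT_eq: "YT g r d alpha beta = {T. SYT (skew_shape g r d alpha beta) g T}"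
  by (simp add: YT_def SYT_def Let_def)

definition piS where
  "piS S g t a = (\<lambda>T\<in>{T. SYT S g T}. if swappable S t a T then swap_entries S t T else T)"

lemma EH_eq: "EH_group g r d alpha beta =
  generate (BijGroup {T. SYT (skew_shape g r d alpha beta) g T})
    {piS (skew_shape g r d alpha beta) g t a |t a. 1 \<le> t \<and> t < g \<and> 0 < a}"
  by (simp add: EH_group_def pi_perm_def piS_def YT_eq Let_def)

lemma box_dist_sym: "box_dist x y = box_dist y x"
  by (simp add: box_dist_def abs_minus_commute)

lemma swap_SYT:
  assumes T: "SYT S g T" and xy: "x \<in> S" "y \<in> S" "T x = t" "T y = Suc t"
    "fst x \<noteq> fst y" "snd x \<noteq> snd y"
  shows "SYT S g (swap_entries S t T)"
proof -
  have bij: "bij_betw T S {1..g}" using T by (simp add: SYT_def)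
  hence inj: "inj_on T S" by (simp add: bij_betw_def)
  have "T y \<in> {1..g}" "T x \<in> {1..g}" using bij_betw_apply[OF bij xy(2)] bij_betw_apply[OF bij xy(1)] by auto
  hence tg: "1 \<le> t" "Suc t \<le> g" using xy by auto
  have b2: "bij_betw (tau t \<circ> T) S {1..g}"
    using bij_betw_trans[OF bij tau_bij[OF tg]] .
  have b3: "bij_betw (\<lambda>x\<in>S. tau t (T x)) S {1..g}"
    by (rule bij_betw_cong[THEN iffD1, OF _ b2]) simp
  have row: "\<forall>i j j'. (i, j) \<in> S \<longrightarrow> (i, j') \<in> S \<longrightarrow> j < j' \<longrightarrow> tau t (T (i, j)) < tau t (T (i, j'))"
  proof (intro allI impI)
    fix i j j' assume h: "(i, j) \<in> S" "(i, j') \<in> S" "j < j'"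
    hence lt: "T (i,j) < T (i,j')" using T by (simp add: SYT_def)
    have "\<not> (T (i,j) = t \<and> T (i,j') = Suc t)"
    proof
      assume "T (i,j) = t \<and> T (i,j') = Suc t"
      hence "(i,j) = x" "(i,j') = y" using inj_onD[OF inj] h xy by simp_all
      thus False using xy by auto
    qed
    thus "tau t (T (i, j)) < tau t (T (i, j'))" using tau_mono lt by blast
  qed
  have col: "\<forall>i i' j. (i, j) \<in> S \<longrightarrow> (i', j) \<in> S \<longrightarrow> i < i' \<longrightarrow> tau t (T (i, j)) < tau t (T (i', j))"
  proof (intro allI impI)
    fix i i' j assume h: "(i, j) \<in> S" "(i', j) \<in> S" "i < i'"
    hence lt: "T (i,j) < T (i',j)" using T by (simp add: SYT_def)
    have "\<not> (T (i,j) = t \<and> T (i',j) = Suc t)"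
    proof
      assume "T (i,j) = t \<and> T (i',j) = Suc t"
      hence "(i,j) = x" "(i',j) = y" using inj_onD[OF inj] h xy by simp_all
      thus False using xy by auto
    qed
    thus "tau t (T (i, j)) < tau t (T (i', j))" using tau_mono lt by blast
  qed
  show ?thesis unfolding SYT_def swap_entries_eq using b3 row col by simp
qed

lemma swappable_SYT:
  assumes T: "SYT S g T" and sw: "swappable S t a T"
  shows "SYT S g (swap_entries S t T) \<and> swappable S t a (swap_entries S t T)
         \<and> swap_entries S t (swap_entries S t T) = T"
proof -
  obtain x y where xy: "x \<in> S" "y \<in> S" "T x = t" "T y = Suc t" "fst x \<noteq> fst y"
    "snd x \<noteq> snd y" "box_dist x y = a"
    using sw unfolding swappable_def by auto
  have 1: "SYT S g (swap_entries S t T)" using swap_SYT[OF T xy(1-6)] .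
  have sw1: "swap_entries S t T y = t" "swap_entries S t T x = t + 1"
    using xy by (auto simp: swap_entries_eq tau_def)
  have 2: "swappable S t a (swap_entries S t T)"
    unfolding swappable_def
    apply (rule bexI[where x=y], rule bexI[where x=x])
    using xy sw1 box_dist_sym[of y x] by auto
  have extT: "T \<in> extensional S" using T by (simp add: SYT_def)
  have 3: "swap_entries S t (swap_entries S t T) = T"
  proof (rule ext)
    fix z show "swap_entries S t (swap_entries S t T) z = T z"
    proof (cases "z \<in> S")
      case True thus ?thesis by (simp add: swap_entries_eq)
    next
      case False
      hence "T z = undefined" using extT by (rule extensional_arb[rotated])
      thus ?thesis using False by (simp add: swap_entries_eq)
    qed
  qed
  show ?thesis using 1 2 3 by blast
qed

lemma piS_Bij: "piS S g t a \<in> Bij {T. SYT S g T}"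
proof -
  have A: "\<And>T. SYT S g T \<Longrightarrow> SYT S g (piS S g t a T) \<and> piS S g t a (piS S g t a T) = T"
  proof -
    fix T assume T: "SYT S g T"
    show "SYT S g (piS S g t a T) \<and> piS S g t a (piS S g t a T) = T"
    proof (cases "swappable S t a T")
      case True
      then show ?thesis using swappable_SYT[OF T True] T by (simp add: piS_def)
    next
      case False
      then show ?thesis using T by (simp add: piS_def)
    qed
  qed
  have "bij_betw (piS S g t a) {T. SYT S g T} {T. SYT S g T}"
    by (rule bij_betw_byWitness[where f'="piS S g t a"]) (auto simp: A)
  moreover have "piS S g t a \<in> extensional {T. SYT S g T}"
    unfolding piS_def by (rule restrict_extensional)
  ultimately show ?thesis by (simp add: Bij_def)
qed

definition invs where
  "invs S T1 T2 = {(u,v). u \<in> S \<and> v \<in> S \<and> T1 u < T1 v \<and> T2 v < T2 u}"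

lemma card_below:
  assumes "bij_betw T S {1..g}" "x \<in> S"
  shows "card {y\<in>S. T y \<le> T x} = T x"
proof -
  have inj: "inj_on T {y\<in>S. T y \<le> T x}"
    by (rule inj_on_subset[OF bij_betw_imp_inj_on[OF assms(1)]]) auto
  have "T ` {y\<in>S. T y \<le> T x} = {v\<in>T ` S. v \<le> T x}" by auto
  also have "\<dots> = {1..T x}" using assms bij_betw_apply[OF assms]
    unfolding bij_betw_def by auto
  finally show ?thesis using card_image[OF inj] by simp
qed

lemma no_inv_eq:
  assumes T1: "SYT S g T1" and T2: "SYT S g T2" and ni: "invs S T1 T2 = {}"
  shows "T1 = T2"
proof (rule extensionalityI)
  show "T1 \<in> extensional S" "T2 \<in> extensional S" using T1 T2 by (auto simp: SYT_def)
  have b1: "bij_betw T1 S {1..g}" and b2: "bij_betw T2 S {1..g}"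
    using T1 T2 by (auto simp: SYT_def)
  have i1: "inj_on T1 S" and i2: "inj_on T2 S" using b1 b2 by (auto simp: bij_betw_def)
  fix x assume x: "x \<in> S"
  have "{y\<in>S. T1 y \<le> T1 x} = {y\<in>S. T2 y \<le> T2 x}"
  proof (rule Set.set_eqI, rule iffI)
    fix y assume "y \<in> {y\<in>S. T1 y \<le> T1 x}"
    hence y: "y \<in> S" "T1 y \<le> T1 x" by auto
    show "y \<in> {y\<in>S. T2 y \<le> T2 x}"
    proof (cases "y = x")
      case False
      hence "T1 y < T1 x" using y i1 x by (metis inj_on_def le_neq_implies_less)
      hence "\<not> T2 x < T2 y" using ni x y unfolding invs_def by blast
      thus ?thesis using y by auto
    qed (use x in auto)
  next
    fix y assume "y \<in> {y\<in>S. T2 y \<le> T2 x}"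
    hence y: "y \<in> S" "T2 y \<le> T2 x" by auto
    show "y \<in> {y\<in>S. T1 y \<le> T1 x}"
    proof (rule ccontr)
      assume "y \<notin> {y\<in>S. T1 y \<le> T1 x}"
      hence "T1 x < T1 y" using y by auto
      hence "\<not> T2 y < T2 x" using ni x y unfolding invs_def by blast
      hence "T2 y = T2 x" using y by auto
      hence "y = x" using i2 x y by (meson inj_on_def)
      thus False using \<open>T1 x < T1 y\<close> by simp
    qed
  qed
  thus "T1 x = T2 x" using card_below[OF b1 x] card_below[OF b2 x] by simp
qed

lemma adj_inv:
  assumes T1: "SYT S g T1" and T2: "SYT S g T2"
  shows "x \<in> S \<Longrightarrow> y \<in> S \<Longrightarrow> T1 x < T1 y \<Longrightarrow> T2 y < T2 x \<Longrightarrow>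
    \<exists>x' y'. x' \<in> S \<and> y' \<in> S \<and> T1 y' = Suc (T1 x') \<and> T2 y' < T2 x'"
proof (induction "T1 y - T1 x" arbitrary: x y rule: less_induct)
  case less
  have b1: "bij_betw T1 S {1..g}" and b2: "bij_betw T2 S {1..g}"
    using T1 T2 by (auto simp: SYT_def)
  have i2: "inj_on T2 S" using b2 by (auto simp: bij_betw_def)
  show ?case
  proof (cases "T1 y = Suc (T1 x)")
    case True thus ?thesis using less.prems by blast
  next
    case False
    have "T1 x \<in> {1..g}" "T1 y \<in> {1..g}" using bij_betw_apply[OF b1 less.prems(1)] bij_betw_apply[OF b1 less.prems(2)] by auto
    hence "Suc (T1 x) \<in> T1 ` S" using False less.prems b1 by (auto simp: bij_betw_def)
    then obtain z where z: "z \<in> S" "T1 z = Suc (T1 x)" by auto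
    have "z \<noteq> x" using z by auto
    hence "T2 z \<noteq> T2 x" using i2 z less.prems by (meson inj_on_def)
    show ?thesis
    proof (cases "T2 z < T2 x")
      case True thus ?thesis using z less.prems by blast
    next
      case False
      hence "T2 y < T2 z" using \<open>T2 z \<noteq> T2 x\<close> less.prems by auto
      moreover have "T1 y - T1 z < T1 y - T1 x" "T1 z < T1 y"
        using z less.prems \<open>T1 y \<noteq> Suc (T1 x)\<close> by auto
      ultimately show ?thesis using less.hyps[of y z] z less.prems by blast
    qed
  qed
qed

lemma main:
  assumes T2: "SYT S g T2"
  shows "SYT S g T1 \<Longrightarrow> \<exists>\<sigma>\<in>generate (BijGroup {T. SYT S g T})
      {piS S g t a |t a. 1 \<le> t \<and> t < g \<and> 0 < a}. \<sigma> T1 = T2"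
proof (induction "card (invs S T1 T2)" arbitrary: T1 rule: less_induct)
  case less
  let ?Y = "{T. SYT S g T}"
  let ?H = "{piS S g t a |t a. 1 \<le> t \<and> t < g \<and> 0 < a}"
  let ?G = "generate (BijGroup ?Y) ?H"
  have T1: "SYT S g T1" by fact
  have b1: "bij_betw T1 S {1..g}" and b2: "bij_betw T2 S {1..g}"
    using T1 T2 by (auto simp: SYT_def)
  have i1: "inj_on T1 S" and i2: "inj_on T2 S" using b1 b2 by (auto simp: bij_betw_def)
  have finS: "finite S" using b1 bij_betw_finite by blast
  have HB: "?H \<subseteq> Bij ?Y" using piS_Bij by blast
  have GB: "?G \<subseteq> Bij ?Y"
  proof -
    have "subgroup ?G (BijGroup ?Y)"
      using group.generate_is_subgroup[OF group_BijGroup] HB by (simp add: BijGroup_def)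
    thus ?thesis by (simp add: subgroup_def BijGroup_def)
  qed
  show ?case
  proof (cases "invs S T1 T2 = {}")
    case True
    hence "T1 = T2" using no_inv_eq[OF T1 T2] by simp
    moreover have "\<one>\<^bsub>BijGroup ?Y\<^esub> \<in> ?G" by (rule generate.one)
    moreover have "\<one>\<^bsub>BijGroup ?Y\<^esub> T1 = T1" using T1 by (simp add: BijGroup_def)
    ultimately show ?thesis by (intro bexI[where x="\<one>\<^bsub>BijGroup ?Y\<^esub>"]) simp_all
  next
    case False
    then obtain x0 y0 where "x0 \<in> S" "y0 \<in> S" "T1 x0 < T1 y0" "T2 y0 < T2 x0"
      unfolding invs_def by auto
    then obtain x y where xy: "x \<in> S" "y \<in> S" "T1 y = Suc (T1 x)" "T2 y < T2 x"
      using adj_inv[OF T1 T2] by blast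
    define t where "t = T1 x"
    define a where "a = box_dist x y"
    have "x \<noteq> y" using xy by auto
    obtain i j where x: "x = (i,j)" by fastforce
    obtain i' j' where y: "y = (i',j')" by fastforce
    have rowne: "i \<noteq> i'"
    proof
      assume "i = i'"
      hence "j \<noteq> j'" using \<open>x \<noteq> y\<close> x y by auto
      show False
      proof (cases "j < j'")
        case True
        have "T2 (i,j) < T2 (i,j')" using T2 xy(1,2) True unfolding x y \<open>i = i'\<close> SYT_def by blast
        thus False using xy(4) unfolding x y \<open>i = i'\<close> by simp
      next
        case False
        hence "j' < j" using \<open>j \<noteq> j'\<close> by auto
        have "T1 (i,j') < T1 (i,j)" using T1 xy(1,2) \<open>j' < j\<close> unfolding x y \<open>i = i'\<close> SYT_def by blast
        thus False using xy(3) unfolding x y \<open>i = i'\<close> by simp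
      qed
    qed
    have colne: "j \<noteq> j'"
    proof
      assume "j = j'"
      show False
      proof (cases "i < i'")
        case True
        have "T2 (i,j) < T2 (i',j)" using T2 xy(1,2) True unfolding x y \<open>j = j'\<close> SYT_def by blast
        thus False using xy(4) unfolding x y \<open>j = j'\<close> by simp
      next
        case False
        hence "i' < i" using rowne by auto
        have "T1 (i',j) < T1 (i,j)" using T1 xy(1,2) \<open>i' < i\<close> unfolding x y \<open>j = j'\<close> SYT_def by blast
        thus False using xy(3) unfolding x y \<open>j = j'\<close> by simp
      qed
    qed
    have apos: "0 < a" using rowne x y unfolding a_def box_dist_def by auto
    have "T1 x \<in> {1..g}" "T1 y \<in> {1..g}" using bij_betw_apply[OF b1 xy(1)] bij_betw_apply[OF b1 xy(2)] by auto
    hence tg: "1 \<le> t" "t < g" using xy t_def by auto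
    have sw: "swappable S t a T1"
      unfolding swappable_def using xy x y rowne colne t_def a_def by force
    define T1' where "T1' = swap_entries S t T1"
    have pi: "piS S g t a T1 = T1'" using sw T1 by (simp add: piS_def T1'_def)
    have T1': "SYT S g T1'" using swappable_SYT[OF T1 sw] T1'_def by simp
    have sub: "invs S T1' T2 \<subseteq> invs S T1 T2 - {(x,y)}"
    proof
      fix p assume "p \<in> invs S T1' T2"
      then obtain u v where p: "p = (u,v)" "u \<in> S" "v \<in> S"
        "tau t (T1 u) < tau t (T1 v)" "T2 v < T2 u"
        unfolding invs_def T1'_def swap_entries_eq by auto
      have "T1 u < T1 v"
      proof (cases "tau t (T1 u) = t \<and> tau t (T1 v) = Suc t")
        case True
        hence "T1 u = T1 y" "T1 v = T1 x" using xy t_def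
          by (metis tau_tau tau_def)+
        hence "u = y" "v = x" using i1 p xy by (meson inj_on_def)+
        thus ?thesis using p xy by auto
      next
        case False thus ?thesis using tau_mono[OF p(4) False] by simp
      qed
      moreover have "p \<noteq> (x,y)" using p xy t_def by (auto simp: tau_def)
      ultimately show "p \<in> invs S T1 T2 - {(x,y)}" using p unfolding invs_def by auto
    qed
    have fin: "finite (invs S T1 T2)"
      by (rule finite_subset[of _ "S \<times> S"]) (auto simp: invs_def finS)
    have "(x,y) \<in> invs S T1 T2" using xy unfolding invs_def by auto
    hence "invs S T1' T2 \<subset> invs S T1 T2" using sub by blast
    hence "card (invs S T1' T2) < card (invs S T1 T2)"
      by (rule psubset_card_mono[OF fin])
    then obtain \<sigma> where s: "\<sigma> \<in> ?G" "\<sigma> T1' = T2" using less.hyps T1' by blast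
    have pG: "piS S g t a \<in> ?G" using tg apos by (blast intro: generate.incl)
    have "\<sigma> \<otimes>\<^bsub>BijGroup ?Y\<^esub> piS S g t a \<in> ?G" by (rule generate.eng[OF s(1) pG])
    moreover have "(\<sigma> \<otimes>\<^bsub>BijGroup ?Y\<^esub> piS S g t a) T1 = T2"
      using s pG GB T1 pi by (auto simp: BijGroup_def compose_def)
    ultimately show ?thesis by blast
  qed
qed

theorem proposition4p1:
  fixes g r d :: nat and alpha beta :: "nat \<Rightarrow> nat"
  assumes "ram_seq r d alpha" and "ram_seq r d beta"
    and "int g - int d + int r \<ge> 0"
    and "rho g r d alpha beta = 0"
  shows "\<forall>T1\<in>YT g r d alpha beta. \<forall>T2\<in>YT g r d alpha beta.
           \<exists>\<sigma>\<in>EH_group g r d alpha beta. \<sigma> T1 = T2"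
  unfolding EH_eq YT_eq using main by blast

end
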